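(* Let $u,v$ be positive integers with $uv\equiv 0\pmod 6$. Then $\Phi(u\times v,4,2)\le\left\lfloor\frac{u}{4}\left(\left\lfloor\frac{uv-1}{3}\left\lfloor\frac{uv-2}{2}\right\rfloor\right\rfloor-1\right)\right\rfloor$.
   Context: A 2-D $(u\times v,4,2)$-OOC is a family $\mathcal C$ of $u\times v$ $(0,1)$-matrices of Hamming weight $4$ such that for all $A=(a_{ij}),B=(b_{ij})\in\mathcal C$ and integers $r$ with $A\ne B$ or $r\not\equiv0\pmod v$, $\sum_{i,j}a_{ij}b_{i,j+r}\le 2$ (column indices mod $v$). $\Phi(u\times v,4,2)$ is the largest size of such a code. *)

theory Defs
  imports Complex_Main
begin

text \<open>A u x v (0,1)-matrix is represented by its support: a set of cells (i,j)
  with i < u, j < v. Hamming weight = cardinality of the support.\<close>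

definition is_matrix :: "nat \<Rightarrow> nat \<Rightarrow> (nat \<times> nat) set \<Rightarrow> bool" where
  "is_matrix u v A \<longleftrightarrow> A \<subseteq> {0..<u} \<times> {0..<v}"

definition corr :: "nat \<Rightarrow> (nat \<times> nat) set \<Rightarrow> (nat \<times> nat) set \<Rightarrow> int \<Rightarrow> nat" where
  "corr v A B r = card {(i,j) \<in> A. (i, nat ((int j + r) mod int v)) \<in> B}"

definition is_OOC_4_2 :: "nat \<Rightarrow> nat \<Rightarrow> (nat \<times> nat) set set \<Rightarrow> bool" where
  "is_OOC_4_2 u v C \<longleftrightarrow>
     (\<forall>A\<in>C. is_matrix u v A \<and> card A = 4) \<and>
     (\<forall>A\<in>C. \<forall>B\<in>C. \<forall>r::int. (A \<noteq> B \<or> \<not> (int v dvd r)) \<longrightarrow> corr v A B r \<le> 2)"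

definition Phi_4_2 :: "nat \<Rightarrow> nat \<Rightarrow> nat" where
  "Phi_4_2 u v = Max {card C | C. is_OOC_4_2 u v C}"

end

theory Submission imports Defs begin

lemma modcancel:
  assumes "b < v" "b' < v" "(int b - int j) mod int v = (int b' - int j) mod int v"
  shows "b = b'"
proof -
  have "((int b - int j) + int j) mod int v = ((int b' - int j) + int j) mod int v"
    using assms(3) by (rule mod_add_cong) simp
  then have "int b mod int v = int b' mod int v" by simp
  with assms(1,2) show ?thesis by simp
qed

lemma shift_match:
  assumes "b' < v" "v > 0"
    and "nat ((int b - int j) mod int v) = nat ((int b' - int l) mod int v)"
  shows "nat ((int b + (int l - int j)) mod int v) = b'"
proof -
  have e: "(int b - int j) mod int v = (int b' - int l) mod int v"
    using assms(3) assms(2) by (simp add: nat_eq_iff2)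
  have "((int b - int j) + int l) mod int v = ((int b' - int l) + int l) mod int v"
    using e by (rule mod_add_cong) simp
  then have "(int b + (int l - int j)) mod int v = int b' mod int v" by (simp add: algebra_simps)
  with assms(1) show ?thesis by simp
qed

lemma two_elems:
  assumes "finite X" "\<not> card X \<le> 1"
  obtains p q where "p \<in> X" "q \<in> X" "p \<noteq> q"
  using assms card_le_Suc0_iff_eq[OF assms(1)] by auto

lemma packing:
  fixes S :: "'i \<Rightarrow> 'a set"
  assumes fI: "finite I" and fP: "finite P" and cP: "card P = N"
    and SP: "\<And>k. k \<in> I \<Longrightarrow> S k \<subseteq> P" and S3: "\<And>k. k \<in> I \<Longrightarrow> card (S k) = 3"
    and inter: "\<And>k l. k \<in> I \<Longrightarrow> l \<in> I \<Longrightarrow> k \<noteq> l \<Longrightarrow> card (S k \<inter> S l) \<le> 1"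
    and ev: "even (N - 1)" and N1: "N \<ge> 1" and ch: "N choose 2 = 3 * M + 4"
  shows "card I \<le> M"
proof -
  define pairs where "pairs X = {Q. Q \<subseteq> X \<and> card Q = 2}" for X :: "'a set"
  have fS: "finite (S k)" if "k \<in> I" for k using SP[OF that] fP finite_subset by blast
  have cpairs: "card (pairs X) = card X choose 2" if "finite X" for X
    unfolding pairs_def using n_subsets[OF that] by simp
  have fpairs: "finite (pairs X)" if "finite X" for X
    using that unfolding pairs_def by (simp add: finite_subset[of _ "Pow X"] subset_iff)
  define Cov where "Cov = (\<Union>k\<in>I. pairs (S k))"
  have disj: "pairs (S k) \<inter> pairs (S l) = {}" if "k \<in> I" "l \<in> I" "k \<noteq> l" for k l
  proof (rule ccontr)
    assume "pairs (S k) \<inter> pairs (S l) \<noteq> {}"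
    then obtain Q where "Q \<subseteq> S k \<inter> S l" "card Q = 2" unfolding pairs_def by auto
    then have "2 \<le> card (S k \<inter> S l)" using card_mono[of "S k \<inter> S l" Q] fS[OF that(1)] by auto
    with inter[OF that] show False by simp
  qed
  have cCov: "card Cov = 3 * card I"
  proof -
    have "card Cov = (\<Sum>k\<in>I. card (pairs (S k)))"
      unfolding Cov_def using fI fS fpairs disj by (intro card_UN_disjoint) auto
    also have "\<dots> = (\<Sum>k\<in>I. 3)" using cpairs fS S3 by (intro sum.cong) (auto simp: choose_two)
    finally show ?thesis by simp
  qed
  have CovP: "Cov \<subseteq> pairs P" unfolding Cov_def pairs_def using SP by auto
  define U where "U = pairs P - Cov"
  have cU: "card U + 3 * card I = 3 * M + 4"
    using card_Diff_subset[OF finite_subset[OF CovP fpairs[OF fP]] CovP] card_mono[OF fpairs[OF fP] CovP]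
      cpairs[OF fP] cP ch cCov unfolding U_def by simp
  have "card U \<noteq> 1"
  proof
    assume "card U = 1"
    then obtain Q0 where U1: "U = {Q0}" by (rule card_1_singletonE)
    then have "Q0 \<in> pairs P" "Q0 \<notin> Cov" unfolding U_def by auto
    then obtain x y where Q0: "Q0 = {x,y}" "x \<noteq> y" "x \<in> P" "y \<in> P"
      unfolding pairs_def by (auto simp: card_2_iff)
    define K where "K = {k\<in>I. x \<in> S k}"
    define Nx where "Nx = (\<Union>k\<in>K. S k - {x})"
    have cNx: "card Nx = 2 * card K"
    proof -
      have "card Nx = (\<Sum>k\<in>K. card (S k - {x}))"
        unfolding Nx_def
      proof (intro card_UN_disjoint)
        show "finite K" using fI unfolding K_def by simp
        show "\<forall>i\<in>K. finite (S i - {x})" using fS unfolding K_def by auto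
        show "\<forall>i\<in>K. \<forall>j\<in>K. i \<noteq> j \<longrightarrow> (S i - {x}) \<inter> (S j - {x}) = {}"
        proof (intro ballI impI)
          fix k l assume kl: "k \<in> K" "l \<in> K" "k \<noteq> l"
          show "(S k - {x}) \<inter> (S l - {x}) = {}"
          proof (rule ccontr)
            assume "(S k - {x}) \<inter> (S l - {x}) \<noteq> {}"
            then obtain z where z: "z \<in> S k" "z \<in> S l" "z \<noteq> x" by auto
            have "{x,z} \<subseteq> S k \<inter> S l" using z kl unfolding K_def by auto
            then have "card {x,z} \<le> card (S k \<inter> S l)"
              using fS kl unfolding K_def by (intro card_mono) auto
            with inter[of k l] kl z show False unfolding K_def by auto
          qed
        qed
      qed
      also have "\<dots> = (\<Sum>k\<in>K. 2)" using S3 fS unfolding K_def by (intro sum.cong) auto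
      finally show ?thesis by simp
    qed
    have NxP: "Nx \<subseteq> P - {x}" unfolding Nx_def K_def using SP by auto
    define W where "W = (P - {x}) - Nx"
    have cW: "card W = (N - 1) - 2 * card K"
      unfolding W_def using card_Diff_subset[OF finite_subset[OF NxP] NxP] fP cNx cP Q0 by simp
    have "W = {y}"
    proof
      show "{y} \<subseteq> W"
      proof -
        have "y \<notin> Nx"
        proof
          assume "y \<in> Nx"
          then obtain k where "k \<in> I" "x \<in> S k" "y \<in> S k" unfolding Nx_def K_def by auto
          then have "Q0 \<in> Cov" unfolding Cov_def pairs_def using Q0 by auto
          with \<open>Q0 \<notin> Cov\<close> show False by simp
        qed
        then show ?thesis unfolding W_def using Q0 by auto
      qed
      show "W \<subseteq> {y}"
      proof
        fix z assume "z \<in> W"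
        then have z: "z \<in> P" "z \<noteq> x" "z \<notin> Nx" unfolding W_def by auto
        have "{x,z} \<in> pairs P" unfolding pairs_def using z Q0 by auto
        moreover have "{x,z} \<notin> Cov"
        proof
          assume "{x,z} \<in> Cov"
          then obtain k where "k \<in> I" "{x,z} \<subseteq> S k" unfolding Cov_def pairs_def by auto
          then have "z \<in> Nx" unfolding Nx_def K_def using z by auto
          with z show False by simp
        qed
        ultimately have "{x,z} \<in> U" unfolding U_def by simp
        then have "{x,z} = {x,y}" using U1 Q0 by simp
        then show "z \<in> {y}" using z by (auto simp: doubleton_eq_iff)
      qed
    qed
    then have "card W = 1" by simp
    moreover from ev obtain t where "N - 1 = 2*t" by (rule evenE)
    ultimately show False using cW by arith
  qed
  with cU show ?thesis by arith
qed


lemma row_bound: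
  assumes ooc: "is_OOC_4_2 u v C" and v0: "v > 0" and iu: "i < u" and n: "u * v = 6 * (m + 1)"
  shows "card {(A,j). A \<in> C \<and> (i,j) \<in> A} \<le> 6*m*m + 9*m + 2"
proof -
  define G where "G = {0..<u} \<times> {0..<v}"
  define I where "I = {(A,j). A \<in> C \<and> (i,j) \<in> A}"
  define sh where "sh j = (\<lambda>(a::nat,b::nat). (a, nat ((int b - int j) mod int v)))" for j :: nat
  define S where "S = (\<lambda>(A::(nat\<times>nat) set, j). sh j ` (A - {(i,j)}))"
  define P where "P = G - {(i,0)}"
  have AG: "A \<subseteq> G" if "A \<in> C" for A using ooc that unfolding is_OOC_4_2_def is_matrix_def G_def by auto
  have A4: "card A = 4" if "A \<in> C" for A using ooc that unfolding is_OOC_4_2_def by auto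
  have fG: "finite G" unfolding G_def by simp
  have fC: "finite C" using AG fG by (intro finite_subset[of C "Pow G"]) auto
  have fI: "finite I"
  proof -
    have "I \<subseteq> C \<times> {0..<v}" unfolding I_def using AG unfolding G_def by auto
    then show ?thesis using fC by (meson finite_SigmaI finite_atLeastLessThan finite_subset)
  qed
  have cG: "card G = u * v" unfolding G_def by simp
  have fP: "finite P" unfolding P_def using fG by simp
  have cP: "card P = u * v - 1" unfolding P_def using cG fG iu v0 unfolding G_def by simp
  have injsh: "inj_on (sh j) G" for j
  proof
    fix c d assume "c \<in> G" "d \<in> G" "sh j c = sh j d"
    then obtain a b a' b' where cd: "c = (a,b)" "d = (a',b')" "b < v" "b' < v" "a = a'"
      "nat ((int b - int j) mod int v) = nat ((int b' - int j) mod int v)"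
      unfolding G_def sh_def by auto
    then have "(int b - int j) mod int v = (int b' - int j) mod int v" using v0 by (simp add: nat_eq_iff2)
    then have "b = b'" using cd modcancel by blast
    then show "c = d" using cd by simp
  qed
  have SP: "S k \<subseteq> P" if "k \<in> I" for k
  proof
    fix p assume p: "p \<in> S k"
    obtain A j where k: "k = (A,j)" "A \<in> C" "(i,j) \<in> A" using \<open>k \<in> I\<close> unfolding I_def by auto
    then obtain a b where ab: "(a,b) \<in> A" "(a,b) \<noteq> (i,j)" "p = sh j (a,b)" using p unfolding S_def by auto
    have abG: "a < u" "b < v" using AG[OF k(2)] ab(1) unfolding G_def by auto
    have jv: "j < v" using AG[OF k(2)] k(3) unfolding G_def by auto
    have pG: "p \<in> G" using ab(3) abG v0 unfolding G_def sh_def by (simp add: nat_less_iff)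
    have "p \<noteq> (i,0)"
    proof
      assume "p = (i,0)"
      then have "a = i" "nat ((int b - int j) mod int v) = 0" using ab(3) unfolding sh_def by auto
      then have "(int b - int j) mod int v = (int j - int j) mod int v" using v0
        by (simp add: nat_eq_iff2 order_antisym)
      then have "b = j" using modcancel abG jv by blast
      with \<open>a = i\<close> ab(2) show False by simp
    qed
    with pG show "p \<in> P" unfolding P_def by simp
  qed
  have S3: "card (S k) = 3" if "k \<in> I" for k
  proof -
    obtain A j where k: "k = (A,j)" "A \<in> C" "(i,j) \<in> A" using \<open>k \<in> I\<close> unfolding I_def by auto
    have ij: "inj_on (sh j) (A - {(i,j)})" using injsh[of j] AG[OF k(2)] by (meson Diff_subset inj_on_subset subset_trans)
    have "S k = sh j ` (A - {(i,j)})" unfolding S_def k by simp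
    then have "card (S k) = card (A - {(i,j)})" using card_image[OF ij] by simp
    also have "\<dots> = 3" using A4[OF k(2)] k(3) by (simp add: card_Diff_singleton)
    finally show ?thesis .
  qed
  have fS: "finite (S k)" if "k \<in> I" for k using SP[OF that] fP finite_subset by blast
  have inter: "card (S k \<inter> S l) \<le> 1" if kl: "k \<in> I" "l \<in> I" "k \<noteq> l" for k l
  proof (rule ccontr)
    assume "\<not> card (S k \<inter> S l) \<le> 1"
    then obtain p q where pq: "p \<in> S k \<inter> S l" "q \<in> S k \<inter> S l" "p \<noteq> q"
      using two_elems fS kl by blast
    obtain A j where k: "k = (A,j)" "A \<in> C" "(i,j) \<in> A" using \<open>k \<in> I\<close> unfolding I_def by auto
    obtain B l' where l: "l = (B,l')" "B \<in> C" "(i,l') \<in> B" using \<open>l \<in> I\<close> unfolding I_def by auto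
    define r where "r = int l' - int j"
    define f where "f = (\<lambda>(a::nat,b::nat). (a, nat ((int b + r) mod int v)))"
    have jv: "j < v" using AG[OF k(2)] k(3) unfolding G_def by auto
    have lv: "l' < v" using AG[OF l(2)] l(3) unfolding G_def by auto
    have match: "f c = d" if "c \<in> A" "d \<in> B" "sh j c = sh l' d" for c d
    proof -
      obtain a b a' b' where cd: "c = (a,b)" "d = (a',b')" by (cases c, cases d) auto
      have "b' < v" using AG[OF l(2)] that(2) cd unfolding G_def by auto
      moreover have "a = a'" "nat ((int b - int j) mod int v) = nat ((int b' - int l') mod int v)"
        using that(3) cd unfolding sh_def by auto
      ultimately show ?thesis using shift_match[of b' v b j l'] v0 cd unfolding f_def r_def by simp
    qed
    have Sk: "S k = sh j ` (A - {(i,j)})" unfolding S_def k by simp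
    have Sl: "S l = sh l' ` (B - {(i,l')})" unfolding S_def l by simp
    obtain c1 where c1a: "c1 \<in> A" "c1 \<noteq> (i,j)" "p = sh j c1" using pq(1) Sk by auto
    obtain d1 where d1a: "d1 \<in> B" "p = sh l' d1" using pq(1) Sl by auto
    obtain c2 where c2a: "c2 \<in> A" "c2 \<noteq> (i,j)" "q = sh j c2" using pq(2) Sk by auto
    obtain d2 where d2a: "d2 \<in> B" "q = sh l' d2" using pq(2) Sl by auto
    note c1 = c1a(1,2) d1a(1) c1a(3) d1a(2)
    note c2 = c2a(1,2) d2a(1) c2a(3) d2a(2)
    have f0: "f (i,j) = (i,l')" unfolding f_def r_def using lv by simp
    have "c1 \<noteq> c2" using pq(3) c1 c2 by auto
    define T where "T = {(a,b) \<in> A. (a, nat ((int b + r) mod int v)) \<in> B}"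
    have sub: "{(i,j), c1, c2} \<subseteq> T"
    proof -
      have "f c1 \<in> B" "f c2 \<in> B" using match c1 c2 by auto
      then show ?thesis using f0 k(3) l(3) c1(1) c2(1) unfolding T_def f_def by auto
    qed
    have "card {(i,j), c1, c2} = 3" using \<open>c1 \<noteq> c2\<close> c1(2) c2(2) by auto
    moreover have "finite T" unfolding T_def using AG[OF k(2)] fG finite_subset
      by (metis (no_types, lifting) case_prodE mem_Collect_eq subsetI)
    ultimately have "3 \<le> card T" using card_mono[OF _ sub] by simp
    moreover have "corr v A B r = card T" unfolding corr_def T_def by simp
    moreover have "A \<noteq> B \<or> \<not> int v dvd r"
    proof (cases "A = B")
      case True
      then have "j \<noteq> l'" using kl k l by auto
      then have "r \<noteq> 0" "\<bar>r\<bar> < int v" unfolding r_def using jv lv by auto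
      then have "\<not> int v dvd r" using dvd_imp_le_int[of r "int v"] by linarith
      then show ?thesis by simp
    qed simp
    then have "corr v A B r \<le> 2" using ooc k(2) l(2) unfolding is_OOC_4_2_def by blast
    ultimately show False by simp
  qed
  have Nv: "u * v - 1 = 6*m + 5" using n by simp
  have ev: "even (u * v - 1 - 1)" using Nv by simp
  have ch: "(u * v - 1) choose 2 = 3 * (6*m*m + 9*m + 2) + 4"
  proof -
    have "(u * v - 1) choose 2 = (6*m+5) * (6*m+4) div 2" unfolding Nv choose_two by (simp add: add.commute)
    also have "(6*m+5) * (6*m+4) = 2 * (3 * (6*m*m + 9*m + 2) + 4)" by (simp add: algebra_simps)
    finally show ?thesis by simp
  qed
  have "card I \<le> 6*m*m + 9*m + 2"
    by (rule packing[OF fI fP cP SP S3 inter ev _ ch]) (use Nv in auto)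
  then show ?thesis unfolding I_def .
qed


lemma code_bound:
  assumes ooc: "is_OOC_4_2 u v C" and v0: "v > 0" and n: "u * v = 6 * (m + 1)"
  shows "4 * card C \<le> u * (6*m*m + 9*m + 2)"
proof -
  define M where "M = 6*m*m + 9*m + 2"
  define I where "I i = {(A,j). A \<in> C \<and> (i,j) \<in> A}" for i
  have AG: "A \<subseteq> {0..<u} \<times> {0..<v}" if "A \<in> C" for A using ooc that unfolding is_OOC_4_2_def is_matrix_def by auto
  have A4: "card A = 4" if "A \<in> C" for A using ooc that unfolding is_OOC_4_2_def by auto
  have fA: "finite A" if "A \<in> C" for A using AG[OF that] finite_subset by blast
  have fC: "finite C" using AG by (intro finite_subset[of C "Pow ({0..<u} \<times> {0..<v})"]) auto
  have "card (SIGMA A:C. A) = (\<Sum>A\<in>C. card A)" using fC fA by simp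
  also have "\<dots> = 4 * card C" using A4 by simp
  finally have c1: "card (SIGMA A:C. A) = 4 * card C" .
  define g where "g = (\<lambda>(A::(nat\<times>nat) set, (a::nat, b::nat)). (a, (A, b)))"
  have inj: "inj_on g (SIGMA A:C. A)" unfolding g_def by (auto simp: inj_on_def)
  have img: "g ` (SIGMA A:C. A) \<subseteq> (SIGMA i:{..<u}. I i)"
    unfolding g_def I_def using AG by fastforce
  have fI: "finite (I i)" for i
  proof -
    have "I i \<subseteq> C \<times> {0..<v}" unfolding I_def using AG by auto
    then show ?thesis using fC by (meson finite_SigmaI finite_atLeastLessThan finite_subset)
  qed
  have "4 * card C = card (g ` (SIGMA A:C. A))" using c1 card_image[OF inj] by simp
  also have "\<dots> \<le> card (SIGMA i:{..<u}. I i)" using img fI by (intro card_mono) auto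
  also have "\<dots> = (\<Sum>i<u. card (I i))" using fI by simp
  also have "\<dots> \<le> (\<Sum>i<u. M)"
    using row_bound[OF ooc v0 _ n] unfolding I_def M_def by (intro sum_mono) auto
  finally show ?thesis unfolding M_def by simp
qed

theorem lemma5p1:
  fixes u v :: nat
  assumes "u > 0" and "v > 0" and "(u * v) mod 6 = 0"
  shows "int (Phi_4_2 u v) \<le>
    \<lfloor>(real u / 4) * (real_of_int \<lfloor>(real (u * v) - 1) / 3 * real_of_int \<lfloor>(real (u * v) - 2) / 2\<rfloor>\<rfloor> - 1)\<rfloor>"
proof -
  obtain q where q: "u * v = 6 * q" using assms(3) by auto
  have "q > 0" using q assms(1,2) by (metis mult_is_0 neq0_conv)
  then obtain m where m: "q = m + 1" by (metis Suc_eq_plus1 gr0_implies_Suc)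
  have n: "u * v = 6 * (m + 1)" using q m by simp
  define M where "M = 6*m*m + 9*m + 2"
  have bnd: "card C \<le> u * M div 4" if "is_OOC_4_2 u v C" for C
    using code_bound[OF that assms(2) n] unfolding M_def by simp
  have ne: "is_OOC_4_2 u v {}" unfolding is_OOC_4_2_def by simp
  have "{card C | C. is_OOC_4_2 u v C} \<subseteq> {..u * M div 4}" using bnd by auto
  then have fin: "finite {card C | C. is_OOC_4_2 u v C}" by (rule finite_subset) simp
  have "Phi_4_2 u v \<le> u * M div 4"
    unfolding Phi_4_2_def using fin ne bnd by (subst Max_le_iff) auto
  have rn: "real (u * v) = 6 * real m + 6" using n by simp
  have f1: "\<lfloor>(real (u * v) - 2) / 2\<rfloor> = 3 * int m + 2"
    unfolding rn by (simp add: floor_eq_iff)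
  have f2: "\<lfloor>(real (u * v) - 1) / 3 * real_of_int (3 * int m + 2)\<rfloor> = int M + 1"
    unfolding rn M_def by (simp add: floor_eq_iff algebra_simps)
  have "int (Phi_4_2 u v) \<le> int (u * M div 4)" using \<open>Phi_4_2 u v \<le> u * M div 4\<close> by simp
  also have "\<dots> \<le> \<lfloor>(real u / 4) * real M\<rfloor>"
  proof -
    have "4 * (u * M div 4) \<le> u * M" by simp
    then have "real (4 * (u * M div 4)) \<le> real (u * M)" by (rule of_nat_mono)
    then have "real (u * M div 4) \<le> real u / 4 * real M" by simp
    then show ?thesis by (simp add: le_floor_iff)
  qed
  also have "\<dots> = \<lfloor>(real u / 4) * (real_of_int \<lfloor>(real (u * v) - 1) / 3 * real_of_int \<lfloor>(real (u * v) - 2) / 2\<rfloor>\<rfloor> - 1)\<rfloor>"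
    unfolding f1 f2 by simp
  finally show ?thesis .
qed

end
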